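(* Let $M\in SL(N,\mathbb Z)$ be of type $\mathcal J_0$, with notation as in the context. Then the lattice $\mathcal L$ generated by $v_1,\dots,v_N$ is invariant under $g_0$, and the matrix of $g_0$ in the basis $(v_1,\dots,v_N)$ equals $M^\top$, i.e. $g_0(v_i)=\sum_{k}M_{ik}v_k$ for all $i$.
   Context: $M\in SL(N,\mathbb Z)$ is of type $\mathcal J_0$ if its characteristic polynomial has at least one real root, at least one non-real root, and all real roots simple. Let $\alpha_1,\dots,\alpha_s$ be the real eigenvalues, $N=s+2n$, and $a_1,\dots,a_s\in\mathbb R^N$ corresponding eigenvectors. Choose one eigenvalue in each complex-conjugate pair of non-real eigenvalues and let $W\subset\mathbb C^N$ be the sum of the generalized eigenspaces of $M$ for the chosen eigenvalues, so $\dim_{\mathbb C}W=n$. Fix a basis $b_1,\dots,b_n$ of $W$ and let $R$ be the matrix of the restriction of $M$ to $W$ in this basis. For $1\le i\le N$ put $v_i=(a_1^{(i)},\dots,a_s^{(i)},b_1^{(i)},\dots,b_n^{(i)})\in\mathbb R^s\times\mathbb C^n$, where $x^{(i)}$ is the $i$-th coordinate of $x$; $(v_1,\dots,v_N)$ is a basis of the real vector space $\mathbb R^s\times\mathbb C^n$. Define $g_0:\mathbb R^s\times\mathbb C^n\to\mathbb R^s\times\mathbb C^n$ by $g_0(w_1,\dots,w_s,z)=(\alpha_1w_1,\dots,\alpha_sw_s,R^\top z)$. *)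

theory Defs
  imports "Jordan_Normal_Form.Char_Poly"
begin

definition rmat :: "int mat \<Rightarrow> real mat" where
  "rmat M = map_mat real_of_int M"

definition cmat :: "int mat \<Rightarrow> complex mat" where
  "cmat M = map_mat complex_of_int M"

definition cpoly :: "int mat \<Rightarrow> complex poly" where
  "cpoly M = char_poly (cmat M)"

definition in_SL :: "nat \<Rightarrow> int mat \<Rightarrow> bool" where
  "in_SL N M \<longleftrightarrow> M \<in> carrier_mat N N \<and> det M = 1"

definition type_J0 :: "int mat \<Rightarrow> bool" where
  "type_J0 M \<longleftrightarrow>
     (\<exists>x::real. poly (cpoly M) (of_real x) = 0) \<and>
     (\<exists>z::complex. z \<notin> \<real> \<and> poly (cpoly M) z = 0) \<and>
     (\<forall>x::real. poly (cpoly M) (of_real x) = 0 \<longrightarrow> order (of_real x) (cpoly M) = 1)"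

definition vsum :: "nat \<Rightarrow> ('b \<Rightarrow> 'a::comm_monoid_add vec) \<Rightarrow> 'b set \<Rightarrow> 'a vec" where
  "vsum N f I = vec N (\<lambda>i. \<Sum>k\<in>I. f k $ i)"

definition gen_eigenspace :: "nat \<Rightarrow> complex mat \<Rightarrow> complex \<Rightarrow> complex vec set" where
  "gen_eigenspace N A lam =
     {x \<in> carrier_vec N. ((A - lam \<cdot>\<^sub>m 1\<^sub>m N) ^\<^sub>m N) *\<^sub>v x = 0\<^sub>v N}"

definition gen_eigen_sum :: "nat \<Rightarrow> complex mat \<Rightarrow> complex set \<Rightarrow> complex vec set" where
  "gen_eigen_sum N A C =
     {vsum N x C | x. \<forall>lam\<in>C. x lam \<in> gen_eigenspace N A lam}"

definition is_basis_of :: "nat \<Rightarrow> complex vec set \<Rightarrow> nat \<Rightarrow> (nat \<Rightarrow> complex vec) \<Rightarrow> bool" where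
  "is_basis_of N W n b \<longleftrightarrow>
     (\<forall>l<n. b l \<in> carrier_vec N) \<and>
     (\<forall>c. vsum N (\<lambda>l. c l \<cdot>\<^sub>v b l) {..<n} = 0\<^sub>v N \<longrightarrow> (\<forall>l<n. c l = 0)) \<and>
     W = {vsum N (\<lambda>l. c l \<cdot>\<^sub>v b l) {..<n} | c. True}"

definition pcomb :: "nat \<Rightarrow> nat \<Rightarrow> nat \<Rightarrow> (nat \<Rightarrow> real) \<Rightarrow> (nat \<Rightarrow> real vec \<times> complex vec)
                     \<Rightarrow> real vec \<times> complex vec" where
  "pcomb s n N c v =
     (vec s (\<lambda>j. \<Sum>k<N. c k * fst (v k) $ j),
      vec n (\<lambda>l. \<Sum>k<N. complex_of_real (c k) * snd (v k) $ l))"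

definition lattice_gen :: "nat \<Rightarrow> nat \<Rightarrow> nat \<Rightarrow> (nat \<Rightarrow> real vec \<times> complex vec)
                           \<Rightarrow> (real vec \<times> complex vec) set" where
  "lattice_gen s n N v = {pcomb s n N (\<lambda>k. real_of_int (c k)) v | c :: nat \<Rightarrow> int. True}"

end

theory Submission imports Defs begin

lemma helperA:
  assumes MN: "M \<in> carrier_mat N N" and dj: "dim_vec (a::real vec) = N"
    and eig: "rmat M *\<^sub>v a = al \<cdot>\<^sub>v a" and i: "i < N"
  shows "al * a $ i = (\<Sum>k<N. real_of_int (M $$ (i, k)) * a $ k)"
proof -
  have "(rmat M *\<^sub>v a) $ i = (al \<cdot>\<^sub>v a) $ i" using eig by simp
  moreover have "(al \<cdot>\<^sub>v a) $ i = al * a $ i" using dj i by simp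
  moreover have "(rmat M *\<^sub>v a) $ i = (\<Sum>k<N. real_of_int (M $$ (i, k)) * a $ k)"
    using MN dj i by (simp add: rmat_def mult_mat_vec_def scalar_prod_def atLeast0LessThan)
  ultimately show ?thesis by simp
qed

lemma helperB:
  assumes MN: "M \<in> carrier_mat N N" and bd: "\<forall>l<n. dim_vec (b l) = N"
    and eq: "cmat M *\<^sub>v b l = vsum N (\<lambda>m. R $$ (m, l) \<cdot>\<^sub>v b m) {..<n}"
    and l: "l < n" and i: "i < N"
  shows "(\<Sum>m<n. R $$ (m, l) * b m $ i) = (\<Sum>k<N. complex_of_int (M $$ (i, k)) * b l $ k)"
proof -
  have "(cmat M *\<^sub>v b l) $ i = vsum N (\<lambda>m. R $$ (m, l) \<cdot>\<^sub>v b m) {..<n} $ i" using eq by simp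
  moreover have "vsum N (\<lambda>m. R $$ (m, l) \<cdot>\<^sub>v b m) {..<n} $ i = (\<Sum>m<n. R $$ (m, l) * b m $ i)"
    using bd i by (simp add: vsum_def)
  moreover have "(cmat M *\<^sub>v b l) $ i = (\<Sum>k<N. complex_of_int (M $$ (i, k)) * b l $ k)"
    using MN bd l i by (simp add: cmat_def mult_mat_vec_def scalar_prod_def atLeast0LessThan)
  ultimately show ?thesis by simp
qed

lemma swap_real:
  assumes A: "\<And>i. i < N \<Longrightarrow> al * x i = (\<Sum>k<N. real_of_int (M $$ (i, k)) * x k)"
  shows "al * (\<Sum>k<N. c k * x k) = (\<Sum>k'<N. (\<Sum>k<N. c k * real_of_int (M $$ (k, k'))) * x k')"
proof -
  have "al * (\<Sum>k<N. c k * x k) = (\<Sum>k<N. c k * (al * x k))"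
    by (simp add: sum_distrib_left algebra_simps)
  also have "\<dots> = (\<Sum>k<N. c k * (\<Sum>k'<N. real_of_int (M $$ (k, k')) * x k'))"
    using A by simp
  also have "\<dots> = (\<Sum>k<N. \<Sum>k'<N. c k * real_of_int (M $$ (k, k')) * x k')"
    by (simp add: sum_distrib_left algebra_simps)
  also have "\<dots> = (\<Sum>k'<N. \<Sum>k<N. c k * real_of_int (M $$ (k, k')) * x k')"
    by (rule sum.swap)
  also have "\<dots> = (\<Sum>k'<N. (\<Sum>k<N. c k * real_of_int (M $$ (k, k'))) * x k')"
    by (simp add: sum_distrib_right)
  finally show ?thesis .
qed

lemma swap_cplx:
  assumes B: "\<And>i. i < N \<Longrightarrow> (\<Sum>m<n. r m * y m i) = (\<Sum>k<N. complex_of_int (M $$ (i, k)) * x k)"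
  shows "(\<Sum>m<n. r m * (\<Sum>k<N. complex_of_real (c k) * y m k)) =
      (\<Sum>k'<N. complex_of_real (\<Sum>k<N. c k * real_of_int (M $$ (k, k'))) * x k')"
proof -
  have "(\<Sum>m<n. r m * (\<Sum>k<N. complex_of_real (c k) * y m k))
      = (\<Sum>m<n. \<Sum>k<N. r m * complex_of_real (c k) * y m k)"
    by (simp add: sum_distrib_left algebra_simps)
  also have "\<dots> = (\<Sum>k<N. \<Sum>m<n. r m * complex_of_real (c k) * y m k)"
    by (rule sum.swap)
  also have "\<dots> = (\<Sum>k<N. complex_of_real (c k) * (\<Sum>m<n. r m * y m k))"
    by (simp add: sum_distrib_left algebra_simps)
  also have "\<dots> = (\<Sum>k<N. complex_of_real (c k) * (\<Sum>k'<N. complex_of_int (M $$ (k, k')) * x k'))"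
    using B by simp
  also have "\<dots> = (\<Sum>k<N. \<Sum>k'<N. complex_of_real (c k) * complex_of_int (M $$ (k, k')) * x k')"
    by (simp add: sum_distrib_left algebra_simps)
  also have "\<dots> = (\<Sum>k'<N. \<Sum>k<N. complex_of_real (c k) * complex_of_int (M $$ (k, k')) * x k')"
    by (rule sum.swap)
  also have "\<dots> = (\<Sum>k'<N. complex_of_real (\<Sum>k<N. c k * real_of_int (M $$ (k, k'))) * x k')"
    by (simp add: sum_distrib_right)
  finally show ?thesis .
qed

lemma sum_delta_mult:
  fixes f :: "nat \<Rightarrow> 'a::comm_semiring_1"
  assumes "i < N"
  shows "(\<Sum>k<N. (if k = i then 1 else 0) * f k) = f i"
proof -
  have "(\<Sum>k<N. (if k = i then 1 else 0) * f k) = (\<Sum>k<N. if k = i then f k else 0)"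
    by (intro sum.cong) auto
  also have "\<dots> = f i" using assms by (simp add: sum.delta)
  finally show ?thesis .
qed

theorem proposition3p6:
  fixes N s n :: nat
    and M :: "int mat"
    and \<alpha> :: "nat \<Rightarrow> real"
    and a :: "nat \<Rightarrow> real vec"
    and C :: "complex set"
    and W :: "complex vec set"
    and b :: "nat \<Rightarrow> complex vec"
    and R :: "complex mat"
    and v :: "nat \<Rightarrow> real vec \<times> complex vec"
    and g0 :: "real vec \<times> complex vec \<Rightarrow> real vec \<times> complex vec"
  assumes SL: "in_SL N M"
    and J0: "type_J0 M"
    and alpha_inj: "inj_on \<alpha> {..<s}"
    and alpha_all: "\<alpha> ` {..<s} = {x::real. poly (cpoly M) (of_real x) = 0}"
    and a_carrier: "\<forall>j<s. a j \<in> carrier_vec N"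
    and a_nonzero: "\<forall>j<s. a j \<noteq> 0\<^sub>v N"
    and a_eig: "\<forall>j<s. rmat M *\<^sub>v a j = \<alpha> j \<cdot>\<^sub>v a j"
    and C_sub: "C \<subseteq> {z. z \<notin> \<real> \<and> poly (cpoly M) z = 0}"
    and C_choice: "\<forall>z. z \<notin> \<real> \<and> poly (cpoly M) z = 0 \<longrightarrow> (z \<in> C \<longleftrightarrow> cnj z \<notin> C)"
    and W_def: "W = gen_eigen_sum N (cmat M) C"
    and N_eq: "N = s + 2 * n"
    and b_basis: "is_basis_of N W n b"
    and R_carrier: "R \<in> carrier_mat n n"
    and R_matrix: "\<forall>l<n. cmat M *\<^sub>v b l = vsum N (\<lambda>m. R $$ (m, l) \<cdot>\<^sub>v b m) {..<n}"
    and v_def: "\<forall>i. v i = (vec s (\<lambda>j. a j $ i), vec n (\<lambda>l. b l $ i))"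
    and g0_def: "\<forall>w z. g0 (w, z) = (vec s (\<lambda>j. \<alpha> j * w $ j), transpose_mat R *\<^sub>v z)"
  shows "g0 ` lattice_gen s n N v \<subseteq> lattice_gen s n N v
     \<and> (\<forall>i<N. g0 (v i) = pcomb s n N (\<lambda>k. real_of_int (M $$ (i, k))) v)"

proof -
  have MN: "M \<in> carrier_mat N N" using SL by (simp add: in_SL_def)
  have bd: "\<forall>l<n. dim_vec (b l) = N" using b_basis unfolding is_basis_of_def carrier_vec_def by blast
  have fv: "fst (v k) $ j = a j $ k" if "j < s" for j k using v_def that by simp
  have sv: "snd (v k) $ l = b l $ k" if "l < n" for l k using v_def that by simp
  have key: "g0 (pcomb s n N c v) = pcomb s n N (\<lambda>k'. \<Sum>k<N. c k * real_of_int (M $$ (k, k'))) v" for c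
  proof -
    have 1: "\<alpha> j * (\<Sum>k<N. c k * a j $ k) = (\<Sum>k'<N. (\<Sum>k<N. c k * real_of_int (M $$ (k, k'))) * a j $ k')"
      if "j < s" for j
    proof -
      have dj: "dim_vec (a j) = N" using a_carrier that carrier_vecD by blast
      have ej: "rmat M *\<^sub>v a j = \<alpha> j \<cdot>\<^sub>v a j" using a_eig that by blast
      show ?thesis by (rule swap_real, rule helperA[OF MN dj ej])
    qed
    have 2: "(\<Sum>m<n. R $$ (m, l) * (\<Sum>k<N. complex_of_real (c k) * b m $ k)) =
      (\<Sum>k'<N. complex_of_real (\<Sum>k<N. c k * real_of_int (M $$ (k, k'))) * b l $ k')"
      if "l < n" for l
    proof -
      have el: "cmat M *\<^sub>v b l = vsum N (\<lambda>m. R $$ (m, l) \<cdot>\<^sub>v b m) {..<n}" using R_matrix that by blast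
      show ?thesis by (rule swap_cplx, rule helperB[OF MN bd el that])
    qed
    have e1: "vec s (\<lambda>j. \<alpha> j * vec s (\<lambda>j. \<Sum>k<N. c k * fst (v k) $ j) $ j)
        = vec s (\<lambda>j. \<Sum>k'<N. (\<Sum>k<N. c k * real_of_int (M $$ (k, k'))) * fst (v k') $ j)"
      using 1 fv by (intro eq_vecI) auto
    have e2: "transpose_mat R *\<^sub>v vec n (\<lambda>l. \<Sum>k<N. complex_of_real (c k) * snd (v k) $ l)
        = vec n (\<lambda>l. \<Sum>k'<N. complex_of_real (\<Sum>k<N. c k * real_of_int (M $$ (k, k'))) * snd (v k') $ l)"
    proof (rule eq_vecI)
      fix l assume l: "l < dim_vec (vec n (\<lambda>l. \<Sum>k'<N. complex_of_real (\<Sum>k<N. c k * real_of_int (M $$ (k, k'))) * snd (v k') $ l))"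
      then have l': "l < n" by simp
      have "(transpose_mat R *\<^sub>v vec n (\<lambda>l. \<Sum>k<N. complex_of_real (c k) * snd (v k) $ l)) $ l
          = (\<Sum>m<n. R $$ (m, l) * (\<Sum>k<N. complex_of_real (c k) * snd (v k) $ m))"
        using R_carrier l' by (simp add: mult_mat_vec_def scalar_prod_def atLeast0LessThan)
      also have "\<dots> = (\<Sum>m<n. R $$ (m, l) * (\<Sum>k<N. complex_of_real (c k) * b m $ k))"
        using sv by (intro sum.cong) auto
      also have "\<dots> = (\<Sum>k'<N. complex_of_real (\<Sum>k<N. c k * real_of_int (M $$ (k, k'))) * b l $ k')"
        using 2 l' by simp
      finally show "(transpose_mat R *\<^sub>v vec n (\<lambda>l. \<Sum>k<N. complex_of_real (c k) * snd (v k) $ l)) $ l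
          = vec n (\<lambda>l. \<Sum>k'<N. complex_of_real (\<Sum>k<N. c k * real_of_int (M $$ (k, k'))) * snd (v k') $ l) $ l"
        using l' sv by simp
    qed (use R_carrier in simp)
    show ?thesis unfolding pcomb_def using g0_def e1 e2 by simp
  qed
  show ?thesis
  proof
    show "g0 ` lattice_gen s n N v \<subseteq> lattice_gen s n N v"
    proof
      fix y assume "y \<in> g0 ` lattice_gen s n N v"
      then obtain c :: "nat \<Rightarrow> int" where y: "y = g0 (pcomb s n N (\<lambda>k. real_of_int (c k)) v)"
        unfolding lattice_gen_def by auto
      then have "y = pcomb s n N (\<lambda>k'. real_of_int (\<Sum>k<N. c k * M $$ (k, k'))) v"
        using key by simp
      then show "y \<in> lattice_gen s n N v" unfolding lattice_gen_def
        by (intro CollectI exI[of _ "\<lambda>k'. \<Sum>k<N. c k * M $$ (k, k')"]) simp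
    qed
  next
    show "\<forall>i<N. g0 (v i) = pcomb s n N (\<lambda>k. real_of_int (M $$ (i, k))) v"
    proof (intro allI impI)
      fix i assume i: "i < N"
      have pv: "pcomb s n N (\<lambda>k. if k = i then 1 else 0) v = v i"
        unfolding pcomb_def
      proof (rule prod_eqI)
        show "fst (vec s (\<lambda>j. \<Sum>k<N. (if k = i then 1 else 0) * fst (v k) $ j),
          vec n (\<lambda>l. \<Sum>k<N. complex_of_real (if k = i then 1 else 0) * snd (v k) $ l)) = fst (v i)"
          using i by (intro eq_vecI) (simp_all add: v_def sum_delta_mult)
        have "complex_of_real (if k = i then 1 else 0) = (if k = i then 1 else 0)" for k by simp
        then show "snd (vec s (\<lambda>j. \<Sum>k<N. (if k = i then 1 else 0) * fst (v k) $ j),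
          vec n (\<lambda>l. \<Sum>k<N. complex_of_real (if k = i then 1 else 0) * snd (v k) $ l)) = snd (v i)"
          using i by (intro eq_vecI) (simp_all add: v_def sum_delta_mult)
      qed
      have "g0 (v i) = pcomb s n N (\<lambda>k'. \<Sum>k<N. (if k = i then 1 else 0) * real_of_int (M $$ (k, k'))) v"
        using key[of "\<lambda>k. if k = i then 1 else 0"] pv by simp
      also have "\<dots> = pcomb s n N (\<lambda>k. real_of_int (M $$ (i, k))) v"
        using i by (simp only: sum_delta_mult)
      finally show "g0 (v i) = pcomb s n N (\<lambda>k. real_of_int (M $$ (i, k))) v" .
    qed
  qed
qed

end
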